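(* Let $L\ge1$, $\boldsymbol{W}\in\mathbb{R}^{n\times d}$, $\boldsymbol{\alpha}_\ell\in\mathbb{R}^n$ ($\ell=1,\dots,L$), $\boldsymbol{\beta}_\ell\in\mathbb{R}^n$ and $\boldsymbol{b}_\ell\in\mathbb{R}^n$ ($\ell=0,\dots,L-1$), $\boldsymbol{b}_L\in\mathbb{R}^d$, and let $\sigma_1,\dots,\sigma_L:\mathbb{R}^n\to\mathbb{R}^n$ be differentiable elementwise activations. Define $$\boldsymbol{z}_0=\boldsymbol{\beta}_0\odot\boldsymbol{W}\boldsymbol{x}+\boldsymbol{b}_0,\qquad \boldsymbol{z}_\ell=\boldsymbol{\beta}_\ell\odot\boldsymbol{W}\boldsymbol{x}+\boldsymbol{\alpha}_\ell\odot\sigma_\ell(\boldsymbol{z}_{\ell-1})+\boldsymbol{b}_\ell\ (1\le\ell\le L-1),$$ $$\mathrm{GradNetC}(\boldsymbol{x})=\boldsymbol{W}^\top[\boldsymbol{\alpha}_L\odot\sigma_L(\boldsymbol{z}_{L-1})]+\boldsymbol{b}_L .$$ Then $\mathrm{GradNetC}=\nabla F$ for some $F\in C^1(\mathbb{R}^d)$, i.e. it is a GradNet.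
   Context: $\odot$ is the entrywise (Hadamard) product. An elementwise activation $\sigma:\mathbb{R}^n\to\mathbb{R}^n$ has the form $\sigma(\boldsymbol{z})=(s_1(z_1),\dots,s_n(z_n))$ with scalar functions $s_j$. A GradNet is a function $f:\mathbb{R}^d\to\mathbb{R}^d$ with $f=\nabla F$ for some continuously differentiable $F:\mathbb{R}^d\to\mathbb{R}$. *)

theory Defs
  imports "HOL-Analysis.Analysis"
begin

definition hadamard :: "real^'n \<Rightarrow> real^'n \<Rightarrow> real^'n" (infixl "\<odot>" 70) where
  "x \<odot> y = (\<chi> i. x $ i * y $ i)"

definition diff_elementwise_activation :: "(real^'n \<Rightarrow> real^'n) \<Rightarrow> bool" where
  "diff_elementwise_activation \<sigma> \<longleftrightarrow>
     (\<exists>s :: 'n \<Rightarrow> real \<Rightarrow> real.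
        (\<forall>z. \<sigma> z = (\<chi> j. s j (z $ j))) \<and> (\<forall>j t. s j differentiable (at t)))"

definition is_gradnet :: "(real^'d \<Rightarrow> real^'d) \<Rightarrow> bool" where
  "is_gradnet f \<longleftrightarrow>
     (\<exists>F :: real^'d \<Rightarrow> real.
        (\<forall>x. (F has_derivative (\<lambda>h. f x \<bullet> h)) (at x)) \<and> continuous_on UNIV f)"

fun gnc_z :: "real^'d^'n \<Rightarrow> (nat \<Rightarrow> real^'n) \<Rightarrow> (nat \<Rightarrow> real^'n) \<Rightarrow> (nat \<Rightarrow> real^'n)
              \<Rightarrow> (nat \<Rightarrow> real^'n \<Rightarrow> real^'n) \<Rightarrow> nat \<Rightarrow> real^'d \<Rightarrow> real^'n" where
  "gnc_z W \<alpha> \<beta> b \<sigma> 0 x = \<beta> 0 \<odot> (W *v x) + b 0"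
| "gnc_z W \<alpha> \<beta> b \<sigma> (Suc l) x =
     \<beta> (Suc l) \<odot> (W *v x) + \<alpha> (Suc l) \<odot> \<sigma> (Suc l) (gnc_z W \<alpha> \<beta> b \<sigma> l x) + b (Suc l)"

definition GradNetC :: "nat \<Rightarrow> real^'d^'n \<Rightarrow> (nat \<Rightarrow> real^'n) \<Rightarrow> (nat \<Rightarrow> real^'n) \<Rightarrow> (nat \<Rightarrow> real^'n)
              \<Rightarrow> real^'d \<Rightarrow> (nat \<Rightarrow> real^'n \<Rightarrow> real^'n) \<Rightarrow> real^'d \<Rightarrow> real^'d" where
  "GradNetC L W \<alpha> \<beta> b bL \<sigma> x =
     transpose W *v (\<alpha> L \<odot> \<sigma> L (gnc_z W \<alpha> \<beta> b \<sigma> (L - 1) x)) + bL"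

end

theory Submission
  imports Defs
begin

lemma antideriv:
  fixes h :: "real \<Rightarrow> real"
  assumes "continuous_on UNIV h"
  shows "((\<lambda>u. LBINT y=0..u. h y) has_real_derivative h x) (at x)"
proof -
  have "((\<lambda>u. LBINT y=0..u. h y) has_vector_derivative h x) (at x within {min 0 (x-1)..max 0 (x+1)})"
    using interval_integral_FTC2[of "min 0 (x-1)" 0 "max 0 (x+1)" h x] continuous_on_subset[OF assms]
    by (auto simp: zero_ereal_def)
  moreover have "x \<in> interior {min 0 (x-1)..max 0 (x+1)}" by auto
  ultimately have "((\<lambda>u. LBINT y=0..u. h y) has_vector_derivative h x) (at x)"
    using at_within_interior by metis
  then show ?thesis by (simp add: has_real_derivative_iff_has_vector_derivative)
qed

lemma dea_comp:
  assumes "diff_elementwise_activation \<sigma>"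
  shows "\<sigma> z $ j = \<sigma> (\<chi> i. z $ j) $ j"
  using assms unfolding diff_elementwise_activation_def by auto

lemma dea_cont:
  assumes "diff_elementwise_activation \<sigma>"
  shows "continuous_on UNIV (\<lambda>t. \<sigma> (\<chi> i. t) $ j)"
proof -
  obtain s where s: "\<And>z. \<sigma> z = (\<chi> j. s j (z $ j))" "\<And>j t. s j differentiable (at t)"
    using assms unfolding diff_elementwise_activation_def by auto
  have "(\<lambda>t. \<sigma> (\<chi> i. t) $ j) = s j" using s(1) by auto
  moreover have "continuous_on UNIV (s j)"
    using s(2) by (simp add: continuous_at_imp_continuous_on differentiable_imp_continuous_within)
  ultimately show ?thesis by metis
qed

fun zc :: "(nat \<Rightarrow> real^'n) \<Rightarrow> (nat \<Rightarrow> real^'n) \<Rightarrow> (nat \<Rightarrow> real^'n)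
              \<Rightarrow> (nat \<Rightarrow> real^'n \<Rightarrow> real^'n) \<Rightarrow> nat \<Rightarrow> 'n \<Rightarrow> real \<Rightarrow> real" where
  "zc \<alpha> \<beta> b \<sigma> 0 j t = \<beta> 0 $ j * t + b 0 $ j"
| "zc \<alpha> \<beta> b \<sigma> (Suc l) j t = \<beta> (Suc l) $ j * t
     + \<alpha> (Suc l) $ j * (\<sigma> (Suc l) (\<chi> i. zc \<alpha> \<beta> b \<sigma> l j t) $ j) + b (Suc l) $ j"

lemma gnc_zc:
  assumes "\<forall>l\<in>{1..L}. diff_elementwise_activation (\<sigma> l)" "l \<le> L"
  shows "gnc_z W \<alpha> \<beta> b \<sigma> l x $ j = zc \<alpha> \<beta> b \<sigma> l j ((W *v x) $ j)"
  using assms(2)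
proof (induction l)
  case 0
  then show ?case by (simp add: hadamard_def)
next
  case (Suc l)
  have "diff_elementwise_activation (\<sigma> (Suc l))" using assms(1) Suc.prems by auto
  then have e: "\<sigma> (Suc l) (gnc_z W \<alpha> \<beta> b \<sigma> l x) $ j = \<sigma> (Suc l) (\<chi> i. gnc_z W \<alpha> \<beta> b \<sigma> l x $ j) $ j"
    by (rule dea_comp)
  show ?case using Suc by (simp add: hadamard_def e)
qed

lemma zc_cont:
  assumes "\<forall>l\<in>{1..L}. diff_elementwise_activation (\<sigma> l)" "l \<le> L"
  shows "continuous_on UNIV (zc \<alpha> \<beta> b \<sigma> l j)"
  using assms(2)
proof (induction l)
  case 0
  then show ?case by (simp add: continuous_intros)
next
  case (Suc l)
  have d: "continuous_on UNIV (\<lambda>t. \<sigma> (Suc l) (\<chi> i. t) $ j)"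
    using assms(1) Suc.prems by (auto intro: dea_cont)
  have c: "continuous_on UNIV (zc \<alpha> \<beta> b \<sigma> l j)" using Suc by auto
  have "continuous_on UNIV ((\<lambda>t. \<sigma> (Suc l) (\<chi> i. t) $ j) \<circ> zc \<alpha> \<beta> b \<sigma> l j)"
    by (rule continuous_on_compose[OF c]) (rule continuous_on_subset[OF d], auto)
  then have "continuous_on UNIV (\<lambda>t. \<sigma> (Suc l) (\<chi> i. zc \<alpha> \<beta> b \<sigma> l j t) $ j)"
    by (simp add: o_def)
  then show ?case by (auto intro!: continuous_intros)
qed

theorem theorem8:
  fixes L :: nat and W :: "real^'d^'n"
    and \<alpha> \<beta> b :: "nat \<Rightarrow> real^'n" and bL :: "real^'d"
    and \<sigma> :: "nat \<Rightarrow> real^'n \<Rightarrow> real^'n"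
  assumes "L \<ge> 1"
    and "\<forall>l\<in>{1..L}. diff_elementwise_activation (\<sigma> l)"
  shows "is_gradnet (GradNetC L W \<alpha> \<beta> b bL \<sigma>)"
proof -
  define h where "h j t = \<alpha> L $ j * (\<sigma> L (\<chi> i. zc \<alpha> \<beta> b \<sigma> (L-1) j t) $ j)" for j t
  have dL: "diff_elementwise_activation (\<sigma> L)" using assms by auto
  have hc: "continuous_on UNIV (h j)" for j
  proof -
    have d: "continuous_on UNIV (\<lambda>t. \<sigma> L (\<chi> i. t) $ j)" using dL by (rule dea_cont)
    have c: "continuous_on UNIV (zc \<alpha> \<beta> b \<sigma> (L-1) j)" using zc_cont[OF assms(2)] by auto
    have "continuous_on UNIV ((\<lambda>t. \<sigma> L (\<chi> i. t) $ j) \<circ> zc \<alpha> \<beta> b \<sigma> (L-1) j)"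
      by (rule continuous_on_compose[OF c]) (rule continuous_on_subset[OF d], auto)
    then show ?thesis unfolding h_def by (auto simp: o_def intro!: continuous_intros)
  qed
  have feq: "GradNetC L W \<alpha> \<beta> b bL \<sigma> x = transpose W *v (\<chi> j. h j ((W *v x) $ j)) + bL" for x
  proof -
    have "\<alpha> L \<odot> \<sigma> L (gnc_z W \<alpha> \<beta> b \<sigma> (L - 1) x) = (\<chi> j. h j ((W *v x) $ j))"
    proof -
      have e: "\<sigma> L (gnc_z W \<alpha> \<beta> b \<sigma> (L - 1) x) $ j = \<sigma> L (\<chi> i. gnc_z W \<alpha> \<beta> b \<sigma> (L - 1) x $ j) $ j" for j
        by (rule dea_comp[OF dL])
      show ?thesis
        apply (subst vec_eq_iff, rule allI)
        apply (simp only: hadamard_def h_def vec_lambda_beta e gnc_zc[OF assms(2) diff_le_self])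
        done
    qed
    then show ?thesis unfolding GradNetC_def by simp
  qed
  define F where "F x = (\<Sum>j\<in>UNIV. LBINT y=0..((W *v x) $ j). h j y) + bL \<bullet> x" for x
  have "(F has_derivative (\<lambda>v. GradNetC L W \<alpha> \<beta> b bL \<sigma> x \<bullet> v)) (at x)" for x
  proof -
    have H: "((\<lambda>u. LBINT y=0..u. h j y) has_real_derivative h j ((W *v x) $ j)) (at ((W *v x) $ j))" for j
      by (rule antideriv[OF hc])
    have lin: "((\<lambda>x. (W *v x) $ j) has_derivative (\<lambda>v. (W *v v) $ j)) (at x)" for j
      using bounded_linear_imp_has_derivative[OF bounded_linear_compose[OF bounded_linear_vec_nth[of j] matrix_vector_mul_bounded_linear[of W]]]
      by simp
    have comp: "((\<lambda>x. LBINT y=0..((W *v x) $ j). h j y) has_derivative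
               (\<lambda>v. h j ((W *v x) $ j) * (W *v v) $ j)) (at x)" for j
      using has_derivative_compose[OF lin H[unfolded has_field_derivative_def]]
      by (simp add: o_def mult.commute)
    have "(F has_derivative (\<lambda>v. (\<Sum>j\<in>UNIV. h j ((W *v x) $ j) * (W *v v) $ j) + bL \<bullet> v)) (at x)"
      unfolding F_def
      by (intro has_derivative_add has_derivative_sum comp has_derivative_inner_right has_derivative_ident)
    moreover have "(\<Sum>j\<in>UNIV. h j ((W *v x) $ j) * (W *v v) $ j) + bL \<bullet> v
        = GradNetC L W \<alpha> \<beta> b bL \<sigma> x \<bullet> v" for v
    proof -
      have "(transpose W *v (\<chi> j. h j ((W *v x) $ j))) \<bullet> v = (\<chi> j. h j ((W *v x) $ j)) \<bullet> (W *v v)"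
        by (simp add: dot_lmul_matrix)
      also have "\<dots> = (\<Sum>j\<in>UNIV. h j ((W *v x) $ j) * (W *v v) $ j)"
        by (simp add: inner_vec_def)
      finally show ?thesis unfolding feq inner_add_left by simp
    qed
    ultimately show ?thesis by simp
  qed
  moreover have "continuous_on UNIV (GradNetC L W \<alpha> \<beta> b bL \<sigma>)"
  proof -
    have "continuous_on UNIV (\<lambda>x. h j ((W *v x) $ j))" for j
      by (rule continuous_on_compose2[OF hc]) (auto intro!: continuous_intros)
    then have c1: "continuous_on UNIV (\<lambda>x. \<chi> j. h j ((W *v x) $ j))"
      by (intro continuous_on_vec_lambda)
    have "continuous_on UNIV (\<lambda>x. transpose W *v (\<chi> j. h j ((W *v x) $ j)))"
      using continuous_on_compose2[OF matrix_vector_mult_linear_continuous_on[of UNIV "transpose W"] c1]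
      by simp
    then have "continuous_on UNIV (\<lambda>x. transpose W *v (\<chi> j. h j ((W *v x) $ j)) + bL)"
      by (intro continuous_on_add continuous_on_const)
    then show ?thesis unfolding feq[abs_def] .
  qed
  ultimately show ?thesis unfolding is_gradnet_def by blast
qed

end
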